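(* Let $(X,\mathsf{d}_X)$ be a compact metric space and $\mathfrak{A}$ a unital C*-algebra, let $\mu$ be a state of $C(X,\mathfrak{A})$, let $q\in\{C(X),\mathbb{C},\mu\}$, and let $\|\cdot\|_{\mathsf{n}}$ be a norm on $\mathfrak{A}$ (over $\mathbb{R}$ or $\mathbb{C}$) equivalent to the C*-norm $\|\cdot\|_{\mathfrak{A}}$. Then $\mathsf{L}^{(\mathsf{n}),q}_{\mathsf{d}_X}$ is lower semi-continuous with respect to $\|\cdot\|_{C(X,\mathfrak{A})}$, the set $\{a\in C(X,\mathfrak{A}):\mathsf{L}^{(\mathsf{n}),q}_{\mathsf{d}_X}(a)<\infty\}$ is dense in $C(X,\mathfrak{A})$, and the set $\{a\in C(X,\mathfrak{A}): a=a^*,\ \mathsf{L}^{(\mathsf{n}),q}_{\mathsf{d}_X}(a)<\infty\}$ is dense in the self-adjoint part of $C(X,\mathfrak{A})$.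
   Context: $C(X,\mathfrak{A})$ is the unital C*-algebra of continuous $\mathfrak{A}$-valued functions on $X$ with pointwise operations, supremum norm, and unit the constant $1_{\mathfrak{A}}$; $C(X,\mathbb{C}1_{\mathfrak{A}})$ is the subalgebra of functions with values in $\mathbb{C}1_{\mathfrak{A}}$. For $a\in C(X,\mathfrak{A})$, $l^{(\mathsf{n})}_{\mathsf{d}_X}(a)=\sup_{x\ne y}\|a(x)-a(y)\|_{\mathsf{n}}/\mathsf{d}_X(x,y)$, and $\mathsf{L}^{(\mathsf{n}),C(X)}_{\mathsf{d}_X}(a)=\max\{l^{(\mathsf{n})}_{\mathsf{d}_X}(a),\inf_{b\in C(X,\mathbb{C}1_{\mathfrak{A}})}\|a-b\|\}$, $\mathsf{L}^{(\mathsf{n}),\mathbb{C}}_{\mathsf{d}_X}(a)=\max\{l^{(\mathsf{n})}_{\mathsf{d}_X}(a),\inf_{\lambda\in\mathbb{C}}\|a-\lambda1\|\}$, $\mathsf{L}^{(\mathsf{n}),\mu}_{\mathsf{d}_X}(a)=\max\{l^{(\mathsf{n})}_{\mathsf{d}_X}(a),\|a-\mu(a)1\|\}$, all norms being the supremum norm of $C(X,\mathfrak{A})$. *)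

theory Defs
  imports "HOL-Analysis.Analysis" "HOL-Library.Extended_Nonnegative_Real"
begin

text \<open>Unital C*-algebra: a real Banach algebra with unit (norm 1 = 1), together with a
  complex scalar multiplication extending the real one and an involution.\<close>
locale cstar_algebra =
  fixes cmult :: "complex \<Rightarrow> 'a::{real_normed_algebra_1, banach} \<Rightarrow> 'a"
    and star :: "'a \<Rightarrow> 'a"
  assumes cmult_add_right: "cmult c (x + y) = cmult c x + cmult c y"
    and cmult_add_left: "cmult (c + d) x = cmult c x + cmult d x"
    and cmult_assoc: "cmult c (cmult d x) = cmult (c * d) x"
    and cmult_of_real: "cmult (of_real r) x = r *\<^sub>R x"
    and cmult_mult_left: "cmult c (x * y) = cmult c x * y"
    and cmult_mult_right: "cmult c (x * y) = x * cmult c y"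
    and norm_cmult: "norm (cmult c x) = cmod c * norm x"
    and star_star: "star (star x) = x"
    and star_add: "star (x + y) = star x + star y"
    and star_cmult: "star (cmult c x) = cmult (cnj c) (star x)"
    and star_mult: "star (x * y) = star y * star x"
    and cstar_identity: "norm (star x * x) = (norm x)\<^sup>2"

text \<open>A norm on the algebra (over the reals; a complex norm is in particular one)
  equivalent to the C*-norm.\<close>
definition equiv_norm :: "('a::real_normed_vector \<Rightarrow> real) \<Rightarrow> bool" where
  "equiv_norm nrm \<longleftrightarrow>
     (\<forall>x y. nrm (x + y) \<le> nrm x + nrm y) \<and>
     (\<forall>r x. nrm (r *\<^sub>R x) = \<bar>r\<bar> * nrm x) \<and>
     (\<forall>x. nrm x = 0 \<longrightarrow> x = 0) \<and>
     (\<exists>c C. 0 < c \<and> 0 < C \<and> (\<forall>x. c * norm x \<le> nrm x \<and> nrm x \<le> C * norm x))"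

text \<open>States of C(X,A) (represented by the bounded continuous functions on the compact type 'x).\<close>
definition is_state ::
  "(complex \<Rightarrow> 'a \<Rightarrow> 'a) \<Rightarrow> ('a \<Rightarrow> 'a) \<Rightarrow> (('x::topological_space \<Rightarrow>\<^sub>C 'a::{real_normed_algebra_1, banach}) \<Rightarrow> complex) \<Rightarrow> bool" where
  "is_state cmult star \<mu> \<longleftrightarrow>
     (\<forall>a b. \<mu> (a + b) = \<mu> a + \<mu> b) \<and>
     (\<forall>c a b. (\<forall>x. apply_bcontfun b x = cmult c (apply_bcontfun a x)) \<longrightarrow> \<mu> b = c * \<mu> a) \<and>
     (\<forall>a b. (\<forall>x. apply_bcontfun b x = star (apply_bcontfun a x) * apply_bcontfun a x)
             \<longrightarrow> Im (\<mu> b) = 0 \<and> 0 \<le> Re (\<mu> b)) \<and>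
     \<mu> (const_bcontfun 1) = 1"

definition lipn :: "('a::real_normed_vector \<Rightarrow> real) \<Rightarrow> ('x::metric_space \<Rightarrow>\<^sub>C 'a) \<Rightarrow> ennreal" where
  "lipn nrm a = (SUP p \<in> {(x, y). x \<noteq> y}.
      ennreal (nrm (apply_bcontfun a (fst p) - apply_bcontfun a (snd p)) / dist (fst p) (snd p)))"

definition scalar_valued :: "(complex \<Rightarrow> 'a \<Rightarrow> 'a) \<Rightarrow> ('x::topological_space \<Rightarrow>\<^sub>C 'a::{real_normed_algebra_1}) \<Rightarrow> bool" where
  "scalar_valued cmult b \<longleftrightarrow> (\<forall>x. \<exists>c. apply_bcontfun b x = cmult c 1)"

definition self_adjoint :: "('a \<Rightarrow> 'a) \<Rightarrow> ('x::topological_space \<Rightarrow>\<^sub>C 'a::metric_space) \<Rightarrow> bool" where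
  "self_adjoint star a \<longleftrightarrow> (\<forall>x. star (apply_bcontfun a x) = apply_bcontfun a x)"

datatype lip_kind = QCX | QC | QMu

definition Lip_q :: "lip_kind \<Rightarrow> (complex \<Rightarrow> 'a \<Rightarrow> 'a) \<Rightarrow> ('a \<Rightarrow> real)
    \<Rightarrow> (('x::metric_space \<Rightarrow>\<^sub>C 'a::{real_normed_algebra_1, banach}) \<Rightarrow> complex)
    \<Rightarrow> ('x \<Rightarrow>\<^sub>C 'a) \<Rightarrow> ennreal" where
  "Lip_q q cmult nrm \<mu> a = max (lipn nrm a)
     (case q of
        QCX \<Rightarrow> (INF b \<in> {b. scalar_valued cmult b}. ennreal (norm (a - b)))
      | QC \<Rightarrow> (INF t::complex. ennreal (norm (a - const_bcontfun (cmult t 1))))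
      | QMu \<Rightarrow> ennreal (norm (a - const_bcontfun (cmult (\<mu> a) 1))))"

definition lower_semicont :: "('b::topological_space \<Rightarrow> ennreal) \<Rightarrow> bool" where
  "lower_semicont L \<longleftrightarrow> (\<forall>r. closed {a. L a \<le> r})"

end

theory Submission
  imports Defs "HOL-Computational_Algebra.Formal_Power_Series"
begin


context cstar_algebra begin

lemma cmult_zero_left: "cmult 0 x = 0"
  using cmult_of_real[of 0 x] by simp

lemma star_scaleR: "star (r *\<^sub>R x) = r *\<^sub>R star x"
  using star_cmult[of "of_real r" x] by (simp add: cmult_of_real)

lemma star_zero: "star 0 = 0"
  using star_scaleR[of 0 0] by simp

lemma star_minus: "star (- x) = - star x"
  using star_scaleR[of "-1" x] by simp

lemma star_diff: "star (x - y) = star x - star y"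
  using star_add[of x "- y"] by (simp add: star_minus)

lemma star_one: "star 1 = 1"
proof -
  have "star 1 = star 1 * star (star 1)" by (simp add: star_star)
  also have "\<dots> = star (star 1 * 1)" by (rule star_mult[symmetric])
  also have "\<dots> = 1" by (simp add: star_star)
  finally show ?thesis .
qed

lemma norm_star_ge: "norm x \<le> norm (star x)"
proof (cases "x = 0")
  case True thus ?thesis by simp
next
  case False
  have "(norm x)\<^sup>2 = norm (star x * x)" by (simp add: cstar_identity)
  also have "\<dots> \<le> norm (star x) * norm x" by (rule norm_mult_ineq)
  finally have "norm x * norm x \<le> norm (star x) * norm x" by (simp add: power2_eq_square)
  thus ?thesis using False by simp
qed

lemma norm_star: "norm (star x) = norm x"
  using norm_star_ge[of x] norm_star_ge[of "star x"] by (simp add: star_star)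

lemma bounded_linear_star: "bounded_linear star"
  by (rule bounded_linear_intro[of _ 1]) (auto simp: star_add star_scaleR norm_star)

lemma star_power: "star (x ^ n) = (star x) ^ n"
proof (induction n)
  case 0 then show ?case by (simp add: star_one)
next
  case (Suc n)
  have "star (x ^ Suc n) = star (x * x ^ n)" by simp
  also have "\<dots> = star (x ^ n) * star x" by (simp add: star_mult)
  also have "\<dots> = (star x) ^ Suc n" using Suc by (simp add: power_commutes)
  finally show ?case .
qed

lemma star_sum: "star (sum f S) = sum (\<lambda>i. star (f i)) S"
  by (induction S rule: infinite_finite_induct) (auto simp: star_zero star_add)

lemma continuous_on_star: "continuous_on S f \<Longrightarrow> continuous_on S (\<lambda>x. star (f x))"
  using bounded_linear.continuous_on[OF bounded_linear_star] by blast

end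

definition gsq :: "nat \<Rightarrow> real" where "gsq n = (1/2) gchoose n"

lemma gsq_bound: "\<bar>gsq n\<bar> \<le> 1"
proof (induction n)
  case 0 then show ?case by (simp add: gsq_def)
next
  case (Suc k)
  have e: "(1/2::real) * gsq k = of_nat k * gsq k + of_nat (Suc k) * gsq (Suc k)"
    unfolding gsq_def by (rule gbinomial_mult_1)
  hence "gsq (Suc k) = (1/2 - real k) * gsq k / real (Suc k)"
    by (simp add: field_simps del: of_nat_Suc)
  hence "\<bar>gsq (Suc k)\<bar> = \<bar>1/2 - real k\<bar> * \<bar>gsq k\<bar> / real (Suc k)"
    by (simp add: abs_mult)
  also have "\<dots> \<le> real (Suc k) * 1 / real (Suc k)"
    by (intro divide_right_mono mult_mono Suc) auto
  finally show ?case by simp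
qed

definition sqr1 :: "'a::{real_normed_algebra_1,banach} \<Rightarrow> 'a" where
  "sqr1 y = (\<Sum>n. gsq n *\<^sub>R (- y) ^ n)"

lemma sqr1_term_bound:
  fixes y :: "'a::{real_normed_algebra_1,banach}"
  assumes "norm y \<le> 1/2"
  shows "norm (gsq n *\<^sub>R (- y) ^ n) \<le> (1/2) ^ n"
proof -
  have "norm (gsq n *\<^sub>R (- y) ^ n) = \<bar>gsq n\<bar> * norm ((- y) ^ n)" by simp
  also have "\<dots> \<le> 1 * norm (- y) ^ n"
    by (intro mult_mono gsq_bound norm_power_ineq) auto
  also have "\<dots> \<le> (1/2) ^ n" using assms by (simp add: power_mono)
  finally show ?thesis .
qed

lemma sqr1_summable:
  fixes y :: "'a::{real_normed_algebra_1,banach}"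
  assumes "norm y \<le> 1/2"
  shows "summable (\<lambda>n. norm (gsq n *\<^sub>R (- y) ^ n))"
  by (rule summable_comparison_test[OF _ summable_geometric[of "1/2::real"]])
     (use sqr1_term_bound[OF assms] in auto)

lemma one_gchoose: "(1::real) gchoose k = (if k \<le> 1 then 1 else 0)"
proof -
  have "(1::real) gchoose k = of_nat (1 choose k)"
    by (metis binomial_gbinomial of_nat_1)
  thus ?thesis by (cases k) (auto simp: binomial_eq_0)
qed

lemma sqr1_sq:
  fixes y :: "'a::{real_normed_algebra_1,banach}"
  assumes "norm y \<le> 1/2"
  shows "sqr1 y * sqr1 y = 1 - y"
proof -
  have "sqr1 y * sqr1 y = (\<Sum>k. \<Sum>i\<le>k. (gsq i *\<^sub>R (- y) ^ i) * (gsq (k - i) *\<^sub>R (- y) ^ (k - i)))"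
    unfolding sqr1_def by (rule Cauchy_product[OF sqr1_summable[OF assms] sqr1_summable[OF assms]])
  also have "\<dots> = (\<Sum>k. ((1::real) gchoose k) *\<^sub>R (- y) ^ k)"
  proof (rule suminf_cong)
    fix k
    have "(\<Sum>i\<le>k. (gsq i *\<^sub>R (- y) ^ i) * (gsq (k - i) *\<^sub>R (- y) ^ (k - i)))
        = (\<Sum>i\<le>k. (gsq i * gsq (k - i)) *\<^sub>R (- y) ^ k)"
    proof (rule sum.cong)
      fix i assume "i \<in> {..k}"
      hence "(- y) ^ i * (- y) ^ (k - i) = (- y) ^ k"
        by (simp add: power_add[symmetric])
      thus "(gsq i *\<^sub>R (- y) ^ i) * (gsq (k - i) *\<^sub>R (- y) ^ (k - i)) = (gsq i * gsq (k - i)) *\<^sub>R (- y) ^ k"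
        by simp
    qed simp
    also have "\<dots> = (\<Sum>i\<le>k. gsq i * gsq (k - i)) *\<^sub>R (- y) ^ k"
      by (simp add: scaleR_sum_left)
    also have "(\<Sum>i\<le>k. gsq i * gsq (k - i)) = (1/2 + 1/2::real) gchoose k"
      unfolding gsq_def atMost_atLeast0 by (rule gbinomial_Vandermonde)
    finally show "(\<Sum>i\<le>k. (gsq i *\<^sub>R (- y) ^ i) * (gsq (k - i) *\<^sub>R (- y) ^ (k - i)))
        = ((1::real) gchoose k) *\<^sub>R (- y) ^ k" by simp
  qed
  also have "\<dots> = (\<Sum>k\<in>{0,1}. ((1::real) gchoose k) *\<^sub>R (- y) ^ k)"
    by (rule suminf_finite) (auto simp: one_gchoose)
  also have "\<dots> = 1 - y" by simp
  finally show ?thesis .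
qed

lemma sqr1_cont: "continuous_on (cball 0 (1/2)) (sqr1 :: 'a::{real_normed_algebra_1,banach} \<Rightarrow> 'a)"
proof -
  have ul: "uniform_limit (cball 0 (1/2)) (\<lambda>n x. \<Sum>i<n. gsq i *\<^sub>R (- x) ^ i)
          (\<lambda>x::'a. suminf (\<lambda>i. gsq i *\<^sub>R (- x) ^ i)) sequentially"
  proof (rule Weierstrass_m_test)
    fix n and x :: 'a assume "x \<in> cball 0 (1/2)"
    hence "norm x \<le> 1/2" by simp
    thus "norm (gsq n *\<^sub>R (- x) ^ n) \<le> (1/2) ^ n" by (rule sqr1_term_bound)
  next
    show "summable (\<lambda>n. (1/2::real) ^ n)" by (rule summable_geometric) simp
  qed
  have ev: "\<forall>\<^sub>F n in sequentially. continuous_on (cball 0 (1/2)) (\<lambda>x::'a. \<Sum>i<n. gsq i *\<^sub>R (- x) ^ i)"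
    by (intro always_eventually allI continuous_on_sum continuous_on_scaleR continuous_on_power
        continuous_on_minus continuous_on_id continuous_on_const)
  have "continuous_on (cball 0 (1/2)) (\<lambda>x::'a. suminf (\<lambda>i. gsq i *\<^sub>R (- x) ^ i))"
    by (rule uniform_limit_theorem[OF ev ul]) simp
  thus ?thesis unfolding sqr1_def[abs_def] .
qed

lemma (in cstar_algebra) star_sqr1:
  assumes "norm y \<le> 1/2" "star y = y"
  shows "star (sqr1 y) = sqr1 y"
proof -
  have s: "summable (\<lambda>n. gsq n *\<^sub>R (- y) ^ n)"
    by (rule summable_norm_cancel[OF sqr1_summable[OF assms(1)]])
  have "star (sqr1 y) = (\<Sum>n. star (gsq n *\<^sub>R (- y) ^ n))"
    unfolding sqr1_def by (rule bounded_linear.suminf[OF bounded_linear_star s])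
  also have "\<dots> = sqr1 y"
    unfolding sqr1_def by (simp add: star_scaleR star_power star_minus assms(2))
  finally show ?thesis .
qed


lemma mkbc: "compact (UNIV :: 'x::topological_space set) \<Longrightarrow> continuous_on UNIV (f :: 'x \<Rightarrow> 'b::metric_space) \<Longrightarrow> f \<in> bcontfun"
  unfolding bcontfun_def using compact_continuous_image compact_imp_bounded by blast

lemma (in cstar_algebra) bounded_linear_cmult: "bounded_linear (cmult c)"
proof (rule bounded_linear_intro[of _ "cmod c"])
  fix r x
  have "cmult c (r *\<^sub>R x) = cmult c (cmult (of_real r) x)" by (simp add: cmult_of_real)
  also have "\<dots> = cmult (of_real r) (cmult c x)" by (simp add: cmult_assoc mult.commute)
  finally show "cmult c (r *\<^sub>R x) = r *\<^sub>R cmult c x" by (simp add: cmult_of_real)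
qed (auto simp: cmult_add_right norm_cmult)

lemma (in cstar_algebra) cmult_minus_right: "cmult c (- x) = - cmult c x"
proof -
  have z: "cmult c 0 = 0" using cmult_add_right[of c 0 0] by simp
  have "cmult c x + cmult c (- x) = 0" using cmult_add_right[of c x "- x"] by (simp add: z)
  thus ?thesis by (metis neg_eq_iff_add_eq_0)
qed

lemma (in cstar_algebra) cmult_diff_right: "cmult c (x - y) = cmult c x - cmult c y"
  using cmult_add_right[of c x "- y"] by (simp add: cmult_minus_right)

lemma (in cstar_algebra) cmult_minus_left: "cmult (- c) x = - cmult c x"
proof -
  have "cmult c x + cmult (- c) x = 0" using cmult_add_left[of c "-c" x] by (simp add: cmult_zero_left)
  thus ?thesis by (metis neg_eq_iff_add_eq_0)
qed

locale cstate = cstar_algebra cmult star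
  for cmult :: "complex \<Rightarrow> 'a::{real_normed_algebra_1, banach} \<Rightarrow> 'a" and star +
  fixes \<mu> :: "('x::metric_space \<Rightarrow>\<^sub>C 'a) \<Rightarrow> complex"
  assumes state: "is_state cmult star \<mu>"
    and cpt: "compact (UNIV :: 'x set)"
begin

lemma bc: "continuous_on UNIV (f :: 'x \<Rightarrow> 'a) \<Longrightarrow> apply_bcontfun (Bcontfun f) = f"
  using mkbc[OF cpt] Bcontfun_inverse by blast

definition bsq :: "('x \<Rightarrow>\<^sub>C 'a) \<Rightarrow> ('x \<Rightarrow>\<^sub>C 'a)" where
  "bsq a = Bcontfun (\<lambda>x. star (a x) * a x)"
definition bcm :: "complex \<Rightarrow> ('x \<Rightarrow>\<^sub>C 'a) \<Rightarrow> ('x \<Rightarrow>\<^sub>C 'a)" where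
  "bcm c a = Bcontfun (\<lambda>x. cmult c (a x))"
definition bst :: "('x \<Rightarrow>\<^sub>C 'a) \<Rightarrow> ('x \<Rightarrow>\<^sub>C 'a)" where
  "bst a = Bcontfun (\<lambda>x. star (a x))"

lemma bsq_apply: "apply_bcontfun (bsq a) x = star (a x) * a x"
  unfolding bsq_def by (subst bc) (auto intro!: continuous_intros continuous_on_star)

lemma bcm_apply: "apply_bcontfun (bcm c a) x = cmult c (a x)"
  unfolding bcm_def by (subst bc)
    (auto intro!: bounded_linear.continuous_on[OF bounded_linear_cmult] continuous_intros)

lemma bst_apply: "apply_bcontfun (bst a) x = star (a x)"
  unfolding bst_def by (subst bc) (auto intro!: continuous_on_star continuous_intros)

lemma mu_add: "\<mu> (a + b) = \<mu> a + \<mu> b"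
  using state unfolding is_state_def by blast

lemma mu_hom: "(\<And>x. apply_bcontfun b x = cmult c (apply_bcontfun a x)) \<Longrightarrow> \<mu> b = c * \<mu> a"
  using state unfolding is_state_def by blast

lemma mu_pos: "Im (\<mu> (bsq a)) = 0" "0 \<le> Re (\<mu> (bsq a))"
proof -
  have "\<forall>x. bsq a x = star (a x) * a x" by (simp add: bsq_apply)
  thus "Im (\<mu> (bsq a)) = 0" "0 \<le> Re (\<mu> (bsq a))" using state unfolding is_state_def by blast+
qed

lemma mu_one: "\<mu> (const_bcontfun 1) = 1"
  using state unfolding is_state_def by blast

lemma mu_zero: "\<mu> 0 = 0"
  using mu_add[of 0 0] by simp

lemma mu_uminus: "\<mu> (- a) = - \<mu> a"
proof -
  have "\<mu> a + \<mu> (- a) = 0" using mu_add[of a "- a"] by (simp add: mu_zero)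
  thus ?thesis by (metis neg_eq_iff_add_eq_0)
qed

lemma mu_diff: "\<mu> (a - b) = \<mu> a - \<mu> b"
  using mu_add[of a "- b"] by (simp add: mu_uminus)

lemma mu_scaleR: "\<mu> (r *\<^sub>R a) = of_real r * \<mu> a"
  by (rule mu_hom) (simp add: cmult_of_real)

lemma mu_bcm: "\<mu> (bcm c a) = c * \<mu> a"
  by (rule mu_hom) (simp add: bcm_apply)

lemma sa_real:
  assumes "self_adjoint star k"
  shows "Im (\<mu> k) = 0"
proof -
  have sk: "\<And>x. star (k x) = k x" using assms by (simp add: self_adjoint_def)
  have "bsq (const_bcontfun 1 + k) = const_bcontfun 1 + 2 *\<^sub>R k + bsq k"
    by (rule bcontfun_eqI) (simp add: bsq_apply star_add star_one sk algebra_simps scaleR_2)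
  hence "\<mu> (bsq (const_bcontfun 1 + k)) = 1 + 2 * \<mu> k + \<mu> (bsq k)"
    by (simp add: mu_add mu_scaleR mu_one)
  hence "Im (\<mu> (bsq (const_bcontfun 1 + k))) = 2 * Im (\<mu> k) + Im (\<mu> (bsq k))" by simp
  thus ?thesis using mu_pos by simp
qed

lemma sa_le_one:
  assumes "self_adjoint star k" "norm k \<le> 1/2"
  shows "Re (\<mu> k) \<le> 1"
proof -
  have sk: "\<And>x. star (k x) = k x" using assms by (simp add: self_adjoint_def)
  have nk: "\<And>x. norm (k x) \<le> 1/2" using assms(2) norm_bounded order_trans by blast
  have ct: "continuous_on UNIV (\<lambda>x. sqr1 (apply_bcontfun k x))"
    by (rule continuous_on_compose2[OF sqr1_cont]) (use nk in auto)
  define c where "c = Bcontfun (\<lambda>x. sqr1 (apply_bcontfun k x))"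
  have capp: "\<And>x. apply_bcontfun c x = sqr1 (k x)" unfolding c_def using bc[OF ct] by simp
  have "bsq c = const_bcontfun 1 - k"
    by (rule bcontfun_eqI) (simp add: bsq_apply capp star_sqr1[OF nk sk] sqr1_sq[OF nk])
  hence "0 \<le> Re (\<mu> (const_bcontfun 1 - k))" using mu_pos(2)[of c] by simp
  thus ?thesis by (simp add: mu_diff mu_one)
qed

lemma sa_bound1:
  assumes "self_adjoint star k" "norm k \<le> 1/2"
  shows "cmod (\<mu> k) \<le> 1"
proof -
  have "self_adjoint star (- k)" using assms(1) by (simp add: self_adjoint_def star_minus)
  hence "Re (\<mu> (- k)) \<le> 1" using sa_le_one assms(2) by simp
  hence "- 1 \<le> Re (\<mu> k)" by (simp add: mu_uminus)
  moreover have "Re (\<mu> k) \<le> 1" using sa_le_one assms by simp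
  moreover have "Im (\<mu> k) = 0" using sa_real assms by simp
  ultimately show ?thesis by (simp add: cmod_def)
qed

lemma sa_bound:
  assumes "self_adjoint star k"
  shows "cmod (\<mu> k) \<le> 2 * norm k"
proof (cases "k = 0")
  case True thus ?thesis by (simp add: mu_zero)
next
  case False
  hence nk: "norm k > 0" by simp
  define k' where "k' = (1 / (2 * norm k)) *\<^sub>R k"
  have "self_adjoint star k'" using assms by (simp add: k'_def self_adjoint_def star_scaleR)
  moreover have "norm k' = 1/2" using nk by (simp add: k'_def)
  ultimately have "cmod (\<mu> k') \<le> 1" using sa_bound1 by simp
  moreover have "cmod (\<mu> k') = cmod (\<mu> k) / (2 * norm k)"
    using nk by (simp add: k'_def mu_scaleR norm_mult norm_divide)
  ultimately show ?thesis using nk by (simp add: field_simps)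
qed

lemma mu_bound: "cmod (\<mu> a) \<le> 4 * norm a"
proof -
  define h where "h = (1/2) *\<^sub>R (a + bst a)"
  define k where "k = bcm (- \<i> / 2) (a - bst a)"
  have "a = h + bcm \<i> k"
  proof (rule bcontfun_eqI)
    fix x
    have "cmult \<i> (cmult (- \<i> / 2) (a x - star (a x))) = cmult (of_real (1/2)) (a x - star (a x))"
      by (simp add: cmult_assoc)
    also have "\<dots> = (1/2) *\<^sub>R (a x - star (a x))" by (rule cmult_of_real)
    finally have c1: "cmult \<i> (cmult (- \<i> / 2) (a x - star (a x))) = (1/2) *\<^sub>R (a x - star (a x))" .
    have "(h + bcm \<i> k) x = (1/2) *\<^sub>R (a x + star (a x)) + (1/2) *\<^sub>R (a x - star (a x))"
      using c1 by (simp add: h_def k_def bcm_apply bst_apply)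
    also have "\<dots> = (1/2) *\<^sub>R a x + (1/2) *\<^sub>R a x"
      by (simp add: scaleR_right_distrib scaleR_right_diff_distrib)
    also have "\<dots> = a x" by (simp add: scaleR_add_left[symmetric])
    finally show "a x = (h + bcm \<i> k) x" by simp
  qed
  hence "\<mu> a = \<mu> h + \<i> * \<mu> k" by (metis mu_add mu_bcm)
  hence "cmod (\<mu> a) \<le> cmod (\<mu> h) + cmod (\<mu> k)"
    by (metis norm_triangle_ineq mult.commute norm_ii norm_mult mult_1_right)
  moreover have "self_adjoint star h"
    by (simp add: self_adjoint_def h_def bst_apply star_add star_scaleR star_star add.commute)
  moreover have "self_adjoint star k"
  proof -
    have "\<And>x. star (cmult (- \<i> / 2) (a x - star (a x))) = cmult (- \<i> / 2) (a x - star (a x))"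
    proof -
      fix x
      have "star (cmult (- \<i> / 2) (a x - star (a x))) = cmult (\<i> / 2) (star (a x) - a x)"
        by (simp add: star_cmult star_diff star_star)
      also have "\<dots> = cmult (- \<i> / 2) (a x - star (a x))"
        by (metis cmult_minus_left cmult_minus_right minus_diff_eq minus_divide_left)
      finally show "?thesis x" .
    qed
    thus ?thesis by (simp add: self_adjoint_def k_def bcm_apply bst_apply)
  qed
  moreover have "norm h \<le> norm a"
  proof (rule norm_bound)
    fix x
    have "norm (h x) = (1/2) * norm (a x + star (a x))" by (simp add: h_def bst_apply)
    also have "\<dots> \<le> (1/2) * (norm (a x) + norm (star (a x)))" by (intro mult_left_mono norm_triangle_ineq) auto
    also have "\<dots> \<le> norm a" using norm_bounded[of a x] by (simp add: norm_star)
    finally show "norm (h x) \<le> norm a" .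
  qed
  moreover have "norm k \<le> norm a"
  proof (rule norm_bound)
    fix x
    have "norm (k x) = (1/2) * norm (a x - star (a x))" by (simp add: k_def bcm_apply bst_apply norm_cmult)
    also have "\<dots> \<le> (1/2) * (norm (a x) + norm (star (a x)))" by (intro mult_left_mono norm_triangle_ineq4) auto
    also have "\<dots> \<le> norm a" using norm_bounded[of a x] by (simp add: norm_star)
    finally show "norm (k x) \<le> norm a" .
  qed
  ultimately show ?thesis using sa_bound[of h] sa_bound[of k] by linarith
qed

lemma mu_lip: "cmod (\<mu> a - \<mu> b) \<le> 4 * dist a b"
  using mu_bound[of "a - b"] by (simp add: mu_diff dist_norm)

end



lemma lsc_crit:
  fixes g :: "'b::metric_space \<Rightarrow> ennreal"
  assumes H: "\<And>a e. 0 < e \<Longrightarrow> \<exists>\<delta>>0. \<forall>a'. dist a' a < \<delta> \<longrightarrow> g a \<le> g a' + ennreal e"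
  shows "closed {a. g a \<le> r}"
proof -
  have "closure {a. g a \<le> r} \<subseteq> {a. g a \<le> r}"
  proof
    fix a assume "a \<in> closure {a. g a \<le> r}"
    hence A: "\<forall>e>0. \<exists>y\<in>{a. g a \<le> r}. dist y a < e" by (simp add: closure_approachable)
    have "g a \<le> r"
    proof (rule ennreal_le_epsilon)
      fix e :: real assume "0 < e"
      then obtain \<delta> where d: "\<delta> > 0" "\<forall>a'. dist a' a < \<delta> \<longrightarrow> g a \<le> g a' + ennreal e" using H by blast
      then obtain y where y: "g y \<le> r" "dist y a < \<delta>" using A by blast
      have "g a \<le> g y + ennreal e" using d y by blast
      also have "\<dots> \<le> r + ennreal e" using y by (simp add: add_right_mono)
      finally show "g a \<le> r + ennreal e" .
    qed
    thus "a \<in> {a. g a \<le> r}" by simp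
  qed
  thus ?thesis by (simp add: closure_subset_eq)
qed

lemma en_tri: "equiv_norm nrm \<Longrightarrow> nrm (x + y) \<le> nrm x + nrm y"
  unfolding equiv_norm_def by blast

lemma en_nonneg: "equiv_norm nrm \<Longrightarrow> 0 \<le> nrm x"
proof -
  assume "equiv_norm nrm"
  then obtain c where "0 < c" "c * norm x \<le> nrm x" unfolding equiv_norm_def by blast
  thus ?thesis by (metis order_trans mult_nonneg_nonneg norm_ge_zero less_imp_le)
qed

lemma en_bound: "equiv_norm nrm \<Longrightarrow> \<exists>C>0. \<forall>x. nrm x \<le> C * norm x"
  unfolding equiv_norm_def by blast

lemma en_lip: "equiv_norm nrm \<Longrightarrow> nrm x \<le> nrm y + nrm (x - y)"
  using en_tri[of nrm y "x - y"] by simp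

lemma inf_dist_lip:
  fixes F :: "'i \<Rightarrow> 'v::real_normed_vector"
  shows "(INF i\<in>I. ennreal (norm (a - F i))) \<le> (INF i\<in>I. ennreal (norm (a' - F i))) + ennreal (dist a a')"
proof (rule ennreal_le_epsilon)
  fix e :: real
  assume lt: "(INF i\<in>I. ennreal (norm (a' - F i))) + ennreal (dist a a') < top" and e: "0 < e"
  hence "(INF i\<in>I. ennreal (norm (a' - F i))) < top" by (simp add: top_unique)
  then obtain q where q: "0 \<le> q" "(INF i\<in>I. ennreal (norm (a' - F i))) = ennreal q"
    by (cases "(INF i\<in>I. ennreal (norm (a' - F i)))") auto
  have "(INF i\<in>I. ennreal (norm (a' - F i))) < ennreal (q + e)"
    using q e by (simp add: ennreal_less_iff)
  then obtain i where i: "i \<in> I" "ennreal (norm (a' - F i)) < ennreal (q + e)"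
    by (auto simp: INF_less_iff)
  have n: "norm (a' - F i) < q + e" using i(2) ennreal_less_iff[OF norm_ge_zero] by blast
  have "(INF i\<in>I. ennreal (norm (a - F i))) \<le> ennreal (norm (a - F i))"
    by (rule INF_lower[OF i(1)])
  also have "\<dots> \<le> ennreal (q + dist a a' + e)"
  proof (rule ennreal_leI)
    have "norm (a - F i) \<le> norm (a' - F i) + norm (a - a')"
      using norm_triangle_ineq[of "a' - F i" "a - a'"] by simp
    thus "norm (a - F i) \<le> q + dist a a' + e" using n by (simp add: dist_norm)
  qed
  also have "\<dots> = (INF i\<in>I. ennreal (norm (a' - F i))) + ennreal (dist a a') + ennreal e"
    using q e by (simp add: ennreal_plus)
  finally show "(INF i\<in>I. ennreal (norm (a - F i))) \<le> (INF i\<in>I. ennreal (norm (a' - F i))) + ennreal (dist a a') + ennreal e" .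
qed

lemma inf_closed:
  fixes F :: "'i \<Rightarrow> 'v::real_normed_vector"
  shows "closed {a. (INF i\<in>I. ennreal (norm (a - F i))) \<le> r}"
proof (rule lsc_crit)
  fix a :: 'v and e :: real assume "0 < e"
  show "\<exists>\<delta>>0. \<forall>a'. dist a' a < \<delta> \<longrightarrow> (INF i\<in>I. ennreal (norm (a - F i))) \<le> (INF i\<in>I. ennreal (norm (a' - F i))) + ennreal e"
  proof (intro exI[of _ e] conjI allI impI)
    fix a' assume "dist a' a < e"
    hence "ennreal (dist a a') \<le> ennreal e" by (simp add: dist_commute ennreal_leI)
    thus "(INF i\<in>I. ennreal (norm (a - F i))) \<le> (INF i\<in>I. ennreal (norm (a' - F i))) + ennreal e"
      using inf_dist_lip[where I=I and a=a and F=F and a'=a'] by (meson add_left_mono order_trans)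
  qed (rule \<open>0 < e\<close>)
qed

lemma lipn_closed:
  assumes en: "equiv_norm nrm"
  shows "closed {a :: 'x::metric_space \<Rightarrow>\<^sub>C 'a::real_normed_vector. lipn nrm a \<le> r}"
proof -
  obtain C where C: "C > 0" "\<And>x. nrm x \<le> C * norm x" using en_bound[OF en] by blast
  define T where "T p a = ennreal (nrm (apply_bcontfun a (fst p) - apply_bcontfun a (snd p)) / dist (fst p) (snd p))"
    for p and a :: "'x \<Rightarrow>\<^sub>C 'a"
  have eq: "{a. lipn nrm a \<le> r} = (\<Inter>p\<in>{(x, y). x \<noteq> y}. {a. T p a \<le> r})"
    unfolding lipn_def T_def by (auto simp: SUP_le_iff)
  have "closed {a. T p a \<le> r}" if pin: "p \<in> {(x, y). x \<noteq> y}" for p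
  proof (rule lsc_crit)
    fix a :: "'x \<Rightarrow>\<^sub>C 'a" and e :: real assume e: "0 < e"
    obtain x y where p: "p = (x, y)" "x \<noteq> y" using pin by (cases p) auto
    define d where "d = dist x y"
    have d: "d > 0" using p by (simp add: d_def)
    show "\<exists>\<delta>>0. \<forall>a'. dist a' a < \<delta> \<longrightarrow> T p a \<le> T p a' + ennreal e"
    proof (intro exI[of _ "e * d / (2 * C)"] conjI allI impI)
      show "e * d / (2 * C) > 0" using e d C by simp
      fix a' assume a': "dist a' a < e * d / (2 * C)"
      have "nrm (a x - a y) \<le> nrm (a' x - a' y) + nrm ((a x - a y) - (a' x - a' y))"
        by (rule en_lip[OF en])
      also have "nrm ((a x - a y) - (a' x - a' y)) \<le> C * norm ((a x - a y) - (a' x - a' y))" by (rule C(2))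
      also have "norm ((a x - a y) - (a' x - a' y)) \<le> norm (a x - a' x) + norm (a y - a' y)"
        using norm_triangle_ineq4[of "a x - a' x" "a y - a' y"] by (simp add: algebra_simps)
      also have "norm (a x - a' x) + norm (a y - a' y) \<le> 2 * dist a' a"
      proof -
        have "norm (a - a') = dist a' a" by (simp add: dist_norm norm_minus_commute)
        thus ?thesis using dist_bounded[of a x a'] dist_bounded[of a y a'] by (simp add: dist_norm)
      qed
      finally have "nrm (a x - a y) \<le> nrm (a' x - a' y) + C * (2 * dist a' a)"
        using C(1) by (simp add: mult_left_mono)
      also have "C * (2 * dist a' a) \<le> e * d"
        using a' C(1) by (simp add: field_simps)
      finally have "nrm (a x - a y) / d \<le> nrm (a' x - a' y) / d + e"
        using d by (simp add: field_simps)
      hence "ennreal (nrm (a x - a y) / d) \<le> ennreal (nrm (a' x - a' y) / d + e)" by (rule ennreal_leI)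
      also have "\<dots> = ennreal (nrm (a' x - a' y) / d) + ennreal e"
        using e d en_nonneg[OF en] by (simp add: ennreal_plus)
      finally show "T p a \<le> T p a' + ennreal e" by (simp add: T_def p d_def)
    qed
  qed
  thus ?thesis unfolding eq by (intro closed_INT) auto
qed

context cstate begin

lemma const_diff: "const_bcontfun u - const_bcontfun v = (const_bcontfun (u - v) :: 'x \<Rightarrow>\<^sub>C 'a)"
  by (rule bcontfun_eqI) simp

lemma norm_const_le: "norm (const_bcontfun u :: 'x \<Rightarrow>\<^sub>C 'a) \<le> norm u"
  by (rule norm_bound) simp

lemma qmu_closed: "closed {a. ennreal (norm (a - const_bcontfun (cmult (\<mu> a) 1))) \<le> r}"
proof (rule lsc_crit)
  fix a :: "'x \<Rightarrow>\<^sub>C 'a" and e :: real assume e: "0 < e"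
  show "\<exists>\<delta>>0. \<forall>a'. dist a' a < \<delta> \<longrightarrow> ennreal (norm (a - const_bcontfun (cmult (\<mu> a) 1)))
       \<le> ennreal (norm (a' - const_bcontfun (cmult (\<mu> a') 1))) + ennreal e"
  proof (intro exI[of _ "e / 5"] conjI allI impI)
    show "e / 5 > 0" using e by simp
    fix a' assume a': "dist a' a < e / 5"
    have cd: "cmult (\<mu> a) 1 - cmult (\<mu> a') 1 = cmult (\<mu> a - \<mu> a') 1"
      using cmult_add_left[of "\<mu> a" "- \<mu> a'" 1] by (simp add: cmult_minus_left)
    have eqn: "a - const_bcontfun (cmult (\<mu> a) 1)
        = (a' - const_bcontfun (cmult (\<mu> a') 1)) + (a - a') - const_bcontfun (cmult (\<mu> a - \<mu> a') 1)"
      by (rule bcontfun_eqI) (simp add: cd[symmetric] algebra_simps)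
    have "norm (a - const_bcontfun (cmult (\<mu> a) 1))
        \<le> norm (a' - const_bcontfun (cmult (\<mu> a') 1)) + norm (a - a') + norm (const_bcontfun (cmult (\<mu> a - \<mu> a') 1) :: 'x \<Rightarrow>\<^sub>C 'a)"
      unfolding eqn by (rule order_trans[OF norm_triangle_ineq4 add_right_mono[OF norm_triangle_ineq]])
    also have "norm (const_bcontfun (cmult (\<mu> a - \<mu> a') 1) :: 'x \<Rightarrow>\<^sub>C 'a) \<le> cmod (\<mu> a - \<mu> a')"
      using norm_const_le[of "cmult (\<mu> a - \<mu> a') 1"] by (simp add: norm_cmult)
    also have "cmod (\<mu> a - \<mu> a') \<le> 4 * dist a a'" by (rule mu_lip)
    finally have "norm (a - const_bcontfun (cmult (\<mu> a) 1)) \<le> norm (a' - const_bcontfun (cmult (\<mu> a') 1)) + e"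
      using a' by (simp add: dist_norm norm_minus_commute)
    hence "ennreal (norm (a - const_bcontfun (cmult (\<mu> a) 1))) \<le> ennreal (norm (a' - const_bcontfun (cmult (\<mu> a') 1)) + e)"
      by (rule ennreal_leI)
    thus "ennreal (norm (a - const_bcontfun (cmult (\<mu> a) 1)))
       \<le> ennreal (norm (a' - const_bcontfun (cmult (\<mu> a') 1))) + ennreal e"
      using e by (simp add: ennreal_plus)
  qed
qed

end



lemma lip_lipn:
  assumes en: "equiv_norm nrm" and L: "\<And>x y. norm (apply_bcontfun f x - apply_bcontfun f y) \<le> L * dist x y"
  shows "lipn nrm (f :: 'x::metric_space \<Rightarrow>\<^sub>C 'a::real_normed_vector) < top"
proof -
  obtain C where C: "C > 0" "\<And>x. nrm x \<le> C * norm x" using en_bound[OF en] by blast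
  have "lipn nrm f \<le> ennreal (C * L)"
    unfolding lipn_def
  proof (rule SUP_least)
    fix p :: "'x \<times> 'x" assume "p \<in> {(x, y). x \<noteq> y}"
    then obtain x y where p: "p = (x, y)" "x \<noteq> y" by (cases p) auto
    have d: "dist x y > 0" using p by simp
    have "nrm (f x - f y) \<le> C * (L * dist x y)"
      using C(2)[of "f x - f y"] L[of x y] C(1) by (meson mult_left_mono order_trans less_imp_le)
    hence "nrm (f x - f y) / dist x y \<le> C * L" using d by (simp add: field_simps)
    thus "ennreal (nrm (f (fst p) - f (snd p)) / dist (fst p) (snd p)) \<le> ennreal (C * L)"
      using p by (simp add: ennreal_leI)
  qed
  thus ?thesis by (meson ennreal_less_top le_less_trans)
qed

lemma approx:
  fixes a :: "'x::metric_space \<Rightarrow>\<^sub>C 'a::real_normed_vector"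
  assumes cpt: "compact (UNIV :: 'x set)" and e: "0 < e"
  shows "\<exists>f K w L. dist f a < e \<and> (\<forall>x y. norm (apply_bcontfun f x - apply_bcontfun f y) \<le> L * dist x y)
     \<and> (\<forall>x. apply_bcontfun f x = (\<Sum>p\<in>K. w p x *\<^sub>R apply_bcontfun a p))"
proof -
  define \<epsilon> where "\<epsilon> = e / 2"
  have \<epsilon>: "\<epsilon> > 0" "\<epsilon> < e" using e by (auto simp: \<epsilon>_def)
  have "uniformly_continuous_on UNIV (apply_bcontfun a)"
    by (rule compact_uniformly_continuous[OF continuous_on_apply_bcontfun cpt])
  then obtain \<delta> where \<delta>: "\<delta> > 0" "\<And>x x'. dist x' x < \<delta> \<Longrightarrow> dist (a x') (a x) < \<epsilon>"
    unfolding uniformly_continuous_on_def using \<epsilon>(1) by blast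
  have cov: "UNIV \<subseteq> (\<Union>p\<in>(UNIV::'x set). ball p (\<delta>/2))" using \<delta>(1) by auto
  have "\<exists>K::'x set. K \<subseteq> UNIV \<and> finite K \<and> UNIV \<subseteq> (\<Union>p\<in>K. ball p (\<delta>/2))"
  proof (rule compactE_image[OF cpt _ cov])
    show "\<And>T. T \<in> UNIV \<Longrightarrow> open (ball T (\<delta>/2))" by (rule open_ball)
    fix C' :: "'x set" assume "C' \<subseteq> UNIV" "finite C'" "UNIV \<subseteq> (\<Union>c\<in>C'. ball c (\<delta>/2))"
    thus "\<exists>K::'x set. K \<subseteq> UNIV \<and> finite K \<and> UNIV \<subseteq> (\<Union>p\<in>K. ball p (\<delta>/2))"
      by blast
  qed
  then obtain K :: "'x set" where K: "finite K" "UNIV \<subseteq> (\<Union>p\<in>K. ball p (\<delta>/2))" by blast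
  define \<psi> where "\<psi> p x = max 0 (\<delta> - dist x p)" for p x :: 'x
  define S where "S x = (\<Sum>p\<in>K. \<psi> p x)" for x
  define N where "N = real (card K)"
  have \<psi>0: "0 \<le> \<psi> p x" for p x by (simp add: \<psi>_def)
  have \<psi>\<delta>: "\<psi> p x \<le> \<delta>" for p x using \<delta>(1) by (simp add: \<psi>_def)
  have \<psi>lip: "\<bar>\<psi> p x - \<psi> p y\<bar> \<le> dist x y" for p x y
    using dist_triangle[of x p y] dist_triangle[of y p x] dist_commute[of x y]
    by (auto simp: \<psi>_def max_def abs_le_iff)
  have Spos: "\<delta>/2 \<le> S x" for x
  proof -
    obtain p where p: "p \<in> K" "x \<in> ball p (\<delta>/2)" using K(2) by blast
    have "\<delta>/2 \<le> \<psi> p x" using p(2) by (simp add: \<psi>_def dist_commute max_def)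
    also have "\<dots> \<le> S x" unfolding S_def by (rule member_le_sum[OF p(1) _ K(1)]) (simp add: \<psi>0)
    finally show ?thesis .
  qed
  have Sgt: "S x > 0" for x using Spos[of x] \<delta>(1) by linarith
  have Slip: "\<bar>S x - S y\<bar> \<le> N * dist x y" for x y
  proof -
    have "\<bar>S x - S y\<bar> = \<bar>\<Sum>p\<in>K. \<psi> p x - \<psi> p y\<bar>" by (simp add: S_def sum_subtractf)
    also have "\<dots> \<le> (\<Sum>p\<in>K. \<bar>\<psi> p x - \<psi> p y\<bar>)" by (rule sum_abs)
    also have "\<dots> \<le> (\<Sum>p\<in>K. dist x y)" by (rule sum_mono) (rule \<psi>lip)
    also have "\<dots> = N * dist x y" by (simp add: N_def)
    finally show ?thesis .
  qed
  define w where "w p x = \<psi> p x / S x" for p x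
  define M where "M = 2 / \<delta> + 4 * N / \<delta>"
  have w0: "0 \<le> w p x" for p x using \<psi>0[of p x] Sgt[of x] by (simp add: w_def)
  have wsum: "(\<Sum>p\<in>K. w p x) = 1" for x
    using Sgt[of x] by (simp add: w_def sum_divide_distrib[symmetric] S_def[symmetric])
  have wlip: "\<bar>w p x - w p y\<bar> \<le> M * dist x y" for p x y
  proof -
    define u where "u = \<psi> p x"
    define v where "v = \<psi> p y"
    define sx where "sx = S x"
    define sy where "sy = S y"
    define d where "d = dist x y"
    have sx: "\<delta>/2 \<le> sx" "0 < sx" using Spos Sgt by (auto simp: sx_def)
    have sy: "\<delta>/2 \<le> sy" "0 < sy" using Spos Sgt by (auto simp: sy_def)
    have d0: "0 \<le> d" by (simp add: d_def)
    have uv: "\<bar>u - v\<bar> \<le> d" using \<psi>lip by (simp add: u_def v_def d_def)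
    have v: "0 \<le> v" "v \<le> \<delta>" using \<psi>0 \<psi>\<delta> by (auto simp: v_def)
    have ss: "\<bar>sy - sx\<bar> \<le> N * d" using Slip[of y x] by (simp add: sx_def sy_def d_def dist_commute)
    have N0: "0 \<le> N" by (simp add: N_def)
    have eq: "w p x - w p y = (u - v) / sx + v * (sy - sx) / (sx * sy)"
      using sx sy by (simp add: w_def u_def v_def sx_def sy_def field_simps)
    have A: "\<bar>(u - v) / sx\<bar> \<le> d / (\<delta>/2)"
      unfolding abs_divide using sx uv d0 \<delta>(1) by (intro frac_le) auto
    have B1: "\<bar>v * (sy - sx)\<bar> \<le> \<delta> * (N * d)"
      unfolding abs_mult using v ss by (intro mult_mono) auto
    have B2: "(\<delta>/2) * (\<delta>/2) \<le> sx * sy"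
      using sx sy \<delta>(1) by (intro mult_mono) auto
    have B: "\<bar>v * (sy - sx) / (sx * sy)\<bar> \<le> \<delta> * (N * d) / ((\<delta>/2) * (\<delta>/2))"
      unfolding abs_divide using B1 B2 sx sy \<delta>(1) N0 d0
      by (intro frac_le) (auto simp: abs_mult)
    have "\<bar>w p x - w p y\<bar> \<le> d / (\<delta>/2) + \<delta> * (N * d) / ((\<delta>/2) * (\<delta>/2))"
      unfolding eq using A B abs_triangle_ineq by (meson add_mono order_trans)
    also have "\<dots> = M * d" using \<delta>(1) by (simp add: M_def field_simps)
    finally show ?thesis by (simp add: d_def)
  qed
  define f0 where "f0 x = (\<Sum>p\<in>K. w p x *\<^sub>R a p)" for x
  have Sne: "(\<Sum>p\<in>K. max 0 (\<delta> - dist x p)) \<noteq> 0" for x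
    using Sgt[of x] by (simp add: S_def \<psi>_def)
  have cont: "continuous_on UNIV f0"
    unfolding f0_def w_def S_def \<psi>_def
    by (intro continuous_intros) (use Sne in auto)
  define f where "f = Bcontfun f0"
  have fapp: "apply_bcontfun f = f0" unfolding f_def by (rule Bcontfun_inverse[OF mkbc[OF cpt cont]])
  have err: "norm (f0 x - a x) \<le> \<epsilon>" for x
  proof -
    have "f0 x - a x = (\<Sum>p\<in>K. w p x *\<^sub>R a p) - (\<Sum>p\<in>K. w p x *\<^sub>R a x)"
      unfolding f0_def scaleR_sum_left[symmetric] wsum by simp
    also have "\<dots> = (\<Sum>p\<in>K. w p x *\<^sub>R (a p - a x))"
      by (simp add: sum_subtractf[symmetric] scaleR_diff_right)
    finally have eq: "f0 x - a x = (\<Sum>p\<in>K. w p x *\<^sub>R (a p - a x))" .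
    have "norm (f0 x - a x) \<le> (\<Sum>p\<in>K. norm (w p x *\<^sub>R (a p - a x)))"
      unfolding eq by (rule norm_sum)
    also have "\<dots> \<le> (\<Sum>p\<in>K. w p x * \<epsilon>)"
    proof (rule sum_mono)
      fix p assume "p \<in> K"
      show "norm (w p x *\<^sub>R (a p - a x)) \<le> w p x * \<epsilon>"
      proof (cases "\<psi> p x = 0")
        case True thus ?thesis by (simp add: w_def)
      next
        case False
        hence "dist p x < \<delta>" by (simp add: \<psi>_def max_def dist_commute split: if_splits)
        hence "norm (a p - a x) < \<epsilon>" using \<delta>(2) by (simp add: dist_norm)
        thus ?thesis using w0[of p x] by (simp add: mult_left_mono)
      qed
    qed
    also have "\<dots> = \<epsilon>" by (simp add: sum_distrib_right[symmetric] wsum)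
    finally show ?thesis .
  qed
  have "norm (f - a) \<le> \<epsilon>" by (rule norm_bound) (simp add: fapp err)
  hence d: "dist f a < e" using \<epsilon> by (simp add: dist_norm)
  have lip: "norm (f x - f y) \<le> (N * M * norm a) * dist x y" for x y
  proof -
    have fe: "f x - f y = (\<Sum>p\<in>K. (w p x - w p y) *\<^sub>R a p)"
      by (simp add: fapp f0_def sum_subtractf[symmetric] scaleR_diff_left)
    have "norm (f x - f y) \<le> (\<Sum>p\<in>K. norm ((w p x - w p y) *\<^sub>R a p))"
      unfolding fe by (rule norm_sum)
    also have "\<dots> \<le> (\<Sum>p\<in>K. (M * dist x y) * norm a)"
    proof (rule sum_mono)
      fix p assume "p \<in> K"
      show "norm ((w p x - w p y) *\<^sub>R a p) \<le> (M * dist x y) * norm a"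
        using wlip[of p x y] norm_bounded[of a p] by (simp add: mult_mono)
    qed
    also have "\<dots> = (N * M * norm a) * dist x y" by (simp add: N_def)
    finally show ?thesis .
  qed
  show ?thesis
    by (intro exI[of _ f] exI[of _ K] exI[of _ w] exI[of _ "N * M * norm a"] conjI d allI lip)
       (simp add: fapp f0_def)
qed



theorem lemma2p6:
  fixes cmult :: "complex \<Rightarrow> 'a::{real_normed_algebra_1, banach} \<Rightarrow> 'a"
    and star :: "'a \<Rightarrow> 'a"
    and \<mu> :: "('x::metric_space \<Rightarrow>\<^sub>C 'a) \<Rightarrow> complex"
    and nrm :: "'a \<Rightarrow> real"
    and q :: lip_kind
  assumes "compact (UNIV :: 'x set)"
    and "cstar_algebra cmult star"
    and "is_state cmult star \<mu>"
    and "equiv_norm nrm"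
  shows "lower_semicont (Lip_q q cmult nrm \<mu>)
    \<and> closure {a. Lip_q q cmult nrm \<mu> a < top} = UNIV
    \<and> {a. self_adjoint star a}
        \<subseteq> closure {a. self_adjoint star a \<and> Lip_q q cmult nrm \<mu> a < top}"
proof -
  interpret cstate cmult star \<mu>
    using assms by (simp add: cstate_def cstate_axioms_def)
  define Qf where "Qf a = (case q of
        QCX \<Rightarrow> (INF b \<in> {b. scalar_valued cmult b}. ennreal (norm (a - b)))
      | QC \<Rightarrow> (INF t::complex. ennreal (norm (a - const_bcontfun (cmult t 1))))
      | QMu \<Rightarrow> ennreal (norm (a - const_bcontfun (cmult (\<mu> a) 1))))" for a :: "'x \<Rightarrow>\<^sub>C 'a"
  have Lq: "Lip_q q cmult nrm \<mu> a = max (lipn nrm a) (Qf a)" for a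
    by (simp add: Lip_q_def Qf_def)
  have Qclosed: "closed {a. Qf a \<le> r}" for r
  proof (cases q)
    case QCX
    show ?thesis using inf_closed[where F="\<lambda>b. b" and I="{b. scalar_valued cmult b}" and r=r]
      by (simp add: Qf_def QCX)
  next
    case QC
    show ?thesis using inf_closed[where F="\<lambda>t. const_bcontfun (cmult t 1) :: 'x \<Rightarrow>\<^sub>C 'a" and I=UNIV and r=r]
      by (simp add: Qf_def QC)
  next
    case QMu
    show ?thesis using qmu_closed[of r] by (simp add: Qf_def QMu)
  qed
  have lsc: "lower_semicont (Lip_q q cmult nrm \<mu>)"
    unfolding lower_semicont_def
  proof
    fix r
    have eq: "{a. Lip_q q cmult nrm \<mu> a \<le> r} = {a. lipn nrm a \<le> r} \<inter> {a. Qf a \<le> r}"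
      by (auto simp: Lq)
    show "closed {a. Lip_q q cmult nrm \<mu> a \<le> r}"
      unfolding eq by (intro closed_Int lipn_closed[OF assms(4)] Qclosed)
  qed
  have Qfin: "Qf a < top" for a
  proof (cases q)
    case QCX
    have "scalar_valued cmult (0 :: 'x \<Rightarrow>\<^sub>C 'a)"
      by (simp add: scalar_valued_def cmult_zero_left exI[of _ 0])
    hence "(INF b \<in> {b. scalar_valued cmult b}. ennreal (norm (a - b))) \<le> ennreal (norm (a - 0))"
      by (intro INF_lower) simp
    thus ?thesis by (simp add: Qf_def QCX) (meson ennreal_less_top le_less_trans)
  next
    case QC
    have "(INF t::complex. ennreal (norm (a - const_bcontfun (cmult t 1)))) \<le> ennreal (norm (a - const_bcontfun (cmult 0 1)))"
      by (intro INF_lower) simp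
    thus ?thesis by (simp add: Qf_def QC) (meson ennreal_less_top le_less_trans)
  next
    case QMu
    thus ?thesis by (simp add: Qf_def)
  qed
  have fin: "lipn nrm f < top \<Longrightarrow> Lip_q q cmult nrm \<mu> f < top" for f
    using Qfin[of f] by (simp add: Lq)
  have main: "\<exists>f. dist f a < e \<and> Lip_q q cmult nrm \<mu> f < top \<and> (self_adjoint star a \<longrightarrow> self_adjoint star f)"
    if e: "0 < e" for a :: "'x \<Rightarrow>\<^sub>C 'a" and e
  proof -
    obtain f K w L where f: "dist f a < e" "\<forall>x y. norm (apply_bcontfun f x - apply_bcontfun f y) \<le> L * dist x y"
       "\<forall>x. apply_bcontfun f x = (\<Sum>p\<in>K. w p x *\<^sub>R apply_bcontfun a p)"
      using approx[OF assms(1) e, of a] by blast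
    have "lipn nrm f < top" using lip_lipn[OF assms(4), of f L] f(2) by blast
    moreover have "self_adjoint star a \<longrightarrow> self_adjoint star f"
      using f(3) by (simp add: self_adjoint_def star_sum star_scaleR)
    ultimately show ?thesis using f(1) fin by blast
  qed
  have "closure {a. Lip_q q cmult nrm \<mu> a < top} = UNIV"
  proof (rule set_eqI)
    fix a :: "'x \<Rightarrow>\<^sub>C 'a"
    show "a \<in> closure {a. Lip_q q cmult nrm \<mu> a < top} \<longleftrightarrow> a \<in> UNIV"
      unfolding closure_approachable using main by fastforce
  qed
  moreover have "{a. self_adjoint star a} \<subseteq> closure {a. self_adjoint star a \<and> Lip_q q cmult nrm \<mu> a < top}"
  proof
    fix a :: "'x \<Rightarrow>\<^sub>C 'a" assume "a \<in> {a. self_adjoint star a}"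
    thus "a \<in> closure {a. self_adjoint star a \<and> Lip_q q cmult nrm \<mu> a < top}"
      unfolding closure_approachable using main by fastforce
  qed
  ultimately show ?thesis using lsc by blast
qed

end
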